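(* Let $n,k,r$ be integers with $k,r\geq 2$, $k<r$ and $n\geq k+r$, and let $H$ be a vertex-$k$-maximal $r$-uniform hypergraph on $n$ vertices. Let $S$ be a minimum vertex-cut of $H$, $C_1$ a component of $H-S$, $C_2=H-(V(C_1)\cup S)$, $H_1=H[V(C_1)\cup S]$ and $H_2=H[V(C_2)\cup S]$. Then both $H_1$ and $H_2$ are vertex-$k$-maximal $r$-uniform hypergraphs.
   Context: A hypergraph $H=(V,E)$ consists of a finite vertex set $V$ and a set $E$ of non-empty subsets of $V$ (edges); it is $r$-uniform if all edges have exactly $r$ elements. The complement $H^c$ has as edges the $r$-subsets of $V$ not in $E$. A subhypergraph is $H'=(V',E')$ with $V'\subseteq V$, $E'\subseteq E$. $H+e=(V,E\cup\{e\})$ for $e\in E(H^c)$. For $Y\subseteq V$, $H[Y]$ is the induced hypergraph with vertex set $Y$ and edges $\{e\in E: e\subseteq Y\}$, and $H-Y=H[V\setminus Y]$. Connectedness and components are defined via paths (alternating sequences of distinct vertices and distinct edges with consecutive vertices in the intermediate edge). A vertex-cut is a set $X$ with $H-X$ disconnected. $\kappa(H)$ is the minimum size of a vertex-cut if one exists, and $|V(H)|-1$ otherwise. $\overline{\kappa}(H)=\max\{\kappa(H'): H'\subseteq H\}$. An $r$-uniform hypergraph $H$ is vertex-$k$-maximal if $\overline{\kappa}(H)\leq k$ but $\overline{\kappa}(H+e)\geq k+1$ for every $e\in E(H^c)$. *)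

theory Defs
  imports Main
begin

definition hypergraph :: "'a set \<Rightarrow> 'a set set \<Rightarrow> bool" where
  "hypergraph V E \<longleftrightarrow> finite V \<and> (\<forall>e\<in>E. e \<noteq> {} \<and> e \<subseteq> V)"

definition uniform_hg :: "nat \<Rightarrow> 'a set \<Rightarrow> 'a set set \<Rightarrow> bool" where
  "uniform_hg r V E \<longleftrightarrow> hypergraph V E \<and> (\<forall>e\<in>E. card e = r)"

definition induced :: "'a set set \<Rightarrow> 'a set \<Rightarrow> 'a set set" where
  "induced E Y = {e \<in> E. e \<subseteq> Y}"

definition is_path :: "'a set \<Rightarrow> 'a set set \<Rightarrow> 'a list \<Rightarrow> 'a set list \<Rightarrow> bool" where
  "is_path V E vs es \<longleftrightarrow> vs \<noteq> [] \<and> distinct vs \<and> distinct es \<and>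
     length vs = Suc (length es) \<and> set vs \<subseteq> V \<and> set es \<subseteq> E \<and>
     (\<forall>i < length es. vs ! i \<in> es ! i \<and> vs ! Suc i \<in> es ! i)"

definition reachable :: "'a set \<Rightarrow> 'a set set \<Rightarrow> 'a \<Rightarrow> 'a \<Rightarrow> bool" where
  "reachable V E u v \<longleftrightarrow> (\<exists>vs es. is_path V E vs es \<and> hd vs = u \<and> last vs = v)"

definition connected_hg :: "'a set \<Rightarrow> 'a set set \<Rightarrow> bool" where
  "connected_hg V E \<longleftrightarrow> (\<forall>u\<in>V. \<forall>v\<in>V. reachable V E u v)"

text \<open>Vertex set of a component (components are induced by their vertex sets).\<close>
definition component_hg :: "'a set \<Rightarrow> 'a set set \<Rightarrow> 'a set \<Rightarrow> bool" where
  "component_hg V E C \<longleftrightarrow> (\<exists>u\<in>V. C = {v \<in> V. reachable V E u v})"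

definition vertex_cut :: "'a set \<Rightarrow> 'a set set \<Rightarrow> 'a set \<Rightarrow> bool" where
  "vertex_cut V E X \<longleftrightarrow> X \<subseteq> V \<and> \<not> connected_hg (V - X) (induced E (V - X))"

definition kappa :: "'a set \<Rightarrow> 'a set set \<Rightarrow> int" where
  "kappa V E = (if \<exists>X. vertex_cut V E X
                then int (Min {card X | X. vertex_cut V E X})
                else int (card V) - 1)"

definition kappa_bar :: "'a set \<Rightarrow> 'a set set \<Rightarrow> int" where
  "kappa_bar V E = Max {kappa V' E' | V' E'. V' \<subseteq> V \<and> E' \<subseteq> E \<and> hypergraph V' E'}"

definition vertex_k_maximal :: "nat \<Rightarrow> nat \<Rightarrow> 'a set \<Rightarrow> 'a set set \<Rightarrow> bool" where
  "vertex_k_maximal k r V E \<longleftrightarrow> uniform_hg r V E \<and> kappa_bar V E \<le> int k \<and>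
     (\<forall>e. e \<subseteq> V \<and> card e = r \<and> e \<notin> E \<longrightarrow> kappa_bar V (insert e E) \<ge> int k + 1)"

end

theory Submission
  imports Defs
begin

lemma kbar_finite:
  assumes "finite V" "finite E"
  shows "finite {kappa V' E' | V' E'. V' \<subseteq> V \<and> E' \<subseteq> E \<and> hypergraph V' E'}"
proof -
  have "{kappa V' E' | V' E'. V' \<subseteq> V \<and> E' \<subseteq> E \<and> hypergraph V' E'}
        \<subseteq> (\<lambda>(a,b). kappa a b) ` (Pow V \<times> Pow E)" by auto
  moreover have "finite ((\<lambda>(a,b). kappa a b) ` (Pow V \<times> Pow E))" using assms by simp
  ultimately show ?thesis by (rule finite_subset)
qed

lemma kbar_ge:
  assumes "finite V" "finite E" "V' \<subseteq> V" "E' \<subseteq> E" "hypergraph V' E'"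
  shows "kappa V' E' \<le> kappa_bar V E"
proof -
  have "kappa V' E' \<in> {kappa V' E' | V' E'. V' \<subseteq> V \<and> E' \<subseteq> E \<and> hypergraph V' E'}"
    using assms(3-5) by blast
  then show ?thesis unfolding kappa_bar_def by (rule Max_ge[OF kbar_finite[OF assms(1,2)]])
qed

lemma kbar_ex:
  fixes V :: "'a set"
  assumes "finite V" "finite E"
  shows "\<exists>V' E'. V' \<subseteq> V \<and> E' \<subseteq> E \<and> hypergraph V' E' \<and> kappa V' E' = kappa_bar V E"
proof -
  have "kappa ({}::'a set) {} \<in> {kappa V' E' | V' E'. V' \<subseteq> V \<and> E' \<subseteq> E \<and> hypergraph V' E'}"
    apply (rule CollectI)
    apply (rule exI[of _ "{}"])
    apply (rule exI[of _ "{}"])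
    by (simp add: hypergraph_def)
  then have ne: "{kappa V' E' | V' E'. V' \<subseteq> V \<and> E' \<subseteq> E \<and> hypergraph V' E'} \<noteq> {}"
    by (rule ex_in_conv[THEN iffD1, OF exI])
  have "kappa_bar V E \<in> {kappa V' E' | V' E'. V' \<subseteq> V \<and> E' \<subseteq> E \<and> hypergraph V' E'}"
    unfolding kappa_bar_def by (rule Max_in[OF kbar_finite[OF assms] ne])
  then obtain V' E' where "kappa_bar V E = kappa V' E'" "V' \<subseteq> V" "E' \<subseteq> E" "hypergraph V' E'"
    by (auto simp only: mem_Collect_eq)
  then show ?thesis by metis
qed

lemma cut_card_finite:
  assumes "finite V"
  shows "finite {card X | X. vertex_cut V E X}"
proof -
  have "{card X | X. vertex_cut V E X} \<subseteq> card ` Pow V" by (auto simp: vertex_cut_def)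
  then show ?thesis using assms finite_subset by blast
qed

lemma kappa_le_cut:
  assumes "finite V" "vertex_cut V E X"
  shows "kappa V E \<le> int (card X)"
proof -
  have "Min {card X | X. vertex_cut V E X} \<le> card X"
    using Min_le[OF cut_card_finite[OF assms(1)]] assms(2) by blast
  then show ?thesis using assms unfolding kappa_def by auto
qed

lemma kappa_min_cut:
  assumes "finite V" "vertex_cut V E S" "\<forall>X. vertex_cut V E X \<longrightarrow> card S \<le> card X"
  shows "kappa V E = int (card S)"
proof -
  have "Min {card X | X. vertex_cut V E X} = card S"
  proof (rule Min_eqI[OF cut_card_finite[OF assms(1)]])
    show "card S \<in> {card X | X. vertex_cut V E X}" using assms(2) by blast
    fix y assume "y \<in> {card X | X. vertex_cut V E X}"
    then obtain X where "y = card X" "vertex_cut V E X" by blast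
    then show "card S \<le> y" using assms(3) by simp
  qed
  then show ?thesis using assms unfolding kappa_def by auto
qed

lemma path_stays:
  assumes "is_path W G vs es" "\<forall>g\<in>G. g \<inter> P \<noteq> {} \<longrightarrow> g \<subseteq> P" "hd vs \<in> P"
  shows "set vs \<subseteq> P"
proof -
  have "\<forall>i. i < length vs \<longrightarrow> vs ! i \<in> P"
  proof
    fix i show "i < length vs \<longrightarrow> vs ! i \<in> P"
    proof (induction i)
      case 0 then show ?case using assms by (auto simp: is_path_def hd_conv_nth)
    next
      case (Suc i)
      show ?case
      proof
        assume l: "Suc i < length vs"
        then have li: "i < length es" using assms(1) by (auto simp: is_path_def)
        have "es ! i \<in> G" using assms(1) li by (auto simp: is_path_def)
        moreover have "vs ! i \<in> es ! i" "vs ! Suc i \<in> es ! i" using assms(1) li by (auto simp: is_path_def)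
        moreover have "vs ! i \<in> P" using Suc l by simp
        ultimately show "vs ! Suc i \<in> P" using assms(2) by blast
      qed
    qed
  qed
  then show ?thesis by (auto simp: in_set_conv_nth)
qed

lemma reach_ext:
  assumes p: "is_path W G vs es" and lx: "last vs = x" and xf: "x \<in> f" and yf: "y \<in> f"
    and fG: "f \<in> G" and yW: "y \<in> W"
  shows "\<exists>vs' es'. is_path W G vs' es' \<and> hd vs' = hd vs \<and> last vs' = y"
proof -
  have ne: "vs \<noteq> []" and dv: "distinct vs" and de: "distinct es"
    and le: "length vs = Suc (length es)" and sW: "set vs \<subseteq> W" and sG: "set es \<subseteq> G"
    and st: "\<And>i. i < length es \<Longrightarrow> vs ! i \<in> es ! i \<and> vs ! Suc i \<in> es ! i"
    using p unfolding is_path_def by blast+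
  show ?thesis
  proof (cases "y \<in> set vs")
    case True
    then obtain j where j: "j < length vs" "vs ! j = y" by (auto simp: in_set_conv_nth)
    have "is_path W G (take (Suc j) vs) (take j es)"
      unfolding is_path_def
    proof (intro conjI allI impI)
      show "take (Suc j) vs \<noteq> []" using ne by simp
      show "distinct (take (Suc j) vs)" using dv by simp
      show "distinct (take j es)" using de by simp
      show "length (take (Suc j) vs) = Suc (length (take j es))" using j le by simp
      show "set (take (Suc j) vs) \<subseteq> W" using sW set_take_subset by fast
      show "set (take j es) \<subseteq> G" using sG set_take_subset by fast
      fix m assume "m < length (take j es)"
      then have "m < j" "m < length es" by auto
      then show "take (Suc j) vs ! m \<in> take j es ! m" "take (Suc j) vs ! Suc m \<in> take j es ! m"
        using st by simp_all
    qed
    moreover have "hd (take (Suc j) vs) = hd vs" using ne by simp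
    moreover have "last (take (Suc j) vs) = y" using j by (simp add: take_Suc_conv_app_nth)
    ultimately show ?thesis by blast
  next
    case False
    obtain i where i: "i \<le> length es" "vs ! i \<in> f" "f \<notin> set (take i es)"
    proof (cases "f \<in> set es")
      case True
      then obtain i where i: "i < length es" "es ! i = f" by (auto simp: in_set_conv_nth)
      have "vs ! i \<in> f" using st[OF i(1)] i(2) by simp
      moreover have "f \<notin> set (take i es)"
      proof
        assume "f \<in> set (take i es)"
        moreover have "f \<in> set (drop i es)" using i by (metis Cons_nth_drop_Suc list.set_intros(1))
        moreover have "set (take i es) \<inter> set (drop i es) = {}"
          using de by (intro set_take_disj_set_drop_if_distinct) auto
        ultimately show False by blast
      qed
      ultimately show ?thesis using that[of i] i(1) by simp
    next
      case f: False
      have "vs ! length es = x" using lx le ne by (simp add: last_conv_nth)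
      then show ?thesis using that[of "length es"] f xf by simp
    qed
    define vs' where "vs' = take (Suc i) vs @ [y]"
    define es' where "es' = take i es @ [f]"
    have lv: "length (take (Suc i) vs) = Suc i" using i le by simp
    have lE: "length (take i es) = i" using i by simp
    have "is_path W G vs' es'"
      unfolding is_path_def
    proof (intro conjI allI impI)
      show "vs' \<noteq> []" by (simp add: vs'_def)
      have "y \<notin> set (take (Suc i) vs)" using False in_set_takeD by fast
      then show "distinct vs'" using dv by (simp add: vs'_def)
      show "distinct es'" using de i by (simp add: es'_def)
      show "length vs' = Suc (length es')" using lv lE by (simp add: vs'_def es'_def)
      show "set vs' \<subseteq> W" using sW yW set_take_subset unfolding vs'_def by fastforce
      show "set es' \<subseteq> G" using sG fG set_take_subset unfolding es'_def by fastforce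
      fix m assume m: "m < length es'"
      then have m': "m \<le> i" using lE by (simp add: es'_def)
      have "vs' ! m \<in> es' ! m \<and> vs' ! Suc m \<in> es' ! m"
      proof (cases "m < i")
        case True
        then have "m < length es" using i by simp
        then show ?thesis using True st lv lE unfolding vs'_def es'_def
          by (simp add: nth_append)
      next
        case False
        then have mi: "m = i" using m' by simp
        have "vs' ! i = vs ! i" using lv unfolding vs'_def by (simp add: nth_append)
        moreover have "vs' ! Suc i = y" using lv unfolding vs'_def by (simp add: nth_append)
        moreover have "es' ! i = f" using lE unfolding es'_def by (simp add: nth_append)
        ultimately show ?thesis using mi i yf by simp
      qed
      then show "vs' ! m \<in> es' ! m" "vs' ! Suc m \<in> es' ! m" by simp_all
    qed
    moreover have "hd vs' = hd vs" using ne by (simp add: vs'_def)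
    moreover have "last vs' = y" by (simp add: vs'_def)
    ultimately show ?thesis by blast
  qed
qed

lemma comp_closed:
  assumes "component_hg W G C" "f \<in> G" "f \<subseteq> W" "f \<inter> C \<noteq> {}"
  shows "f \<subseteq> C"
proof
  obtain u where u: "u \<in> W" "C = {v \<in> W. reachable W G u v}"
    using assms(1) unfolding component_hg_def by blast
  obtain x where x: "x \<in> f" "x \<in> C" using assms(4) by blast
  then obtain vs es where p: "is_path W G vs es" "hd vs = u" "last vs = x"
    using u unfolding reachable_def by blast
  fix y assume y: "y \<in> f"
  then have yW: "y \<in> W" using assms(3) by blast
  obtain vs' es' where "is_path W G vs' es'" "hd vs' = hd vs" "last vs' = y"
    using reach_ext[OF p(1) p(3) x(1) y assms(2) yW] by blast
  then have "reachable W G u y" using p(2) unfolding reachable_def by blast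
  then show "y \<in> C" using u yW by blast
qed

lemma side_max:
  assumes VM: "vertex_k_maximal k r V E" and SV: "S \<subseteq> V" and cS: "card S \<le> k" and kr: "k < r"
    and PV: "P \<subseteq> V - S"
    and clo: "\<And>f. f \<in> E \<Longrightarrow> f \<subseteq> V - S \<Longrightarrow> f \<inter> P \<noteq> {} \<Longrightarrow> f \<subseteq> P"
  shows "vertex_k_maximal k r (P \<union> S) (induced E (P \<union> S))"
proof -
  let ?A = "P \<union> S"
  have hV: "hypergraph V E" and un: "\<forall>e\<in>E. card e = r" and kb: "kappa_bar V E \<le> int k"
    and mx: "\<And>e. e \<subseteq> V \<Longrightarrow> card e = r \<Longrightarrow> e \<notin> E \<Longrightarrow> kappa_bar V (insert e E) \<ge> int k + 1"
    using VM unfolding vertex_k_maximal_def uniform_hg_def by blast+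
  have fV: "finite V" and EV: "\<And>f. f \<in> E \<Longrightarrow> f \<subseteq> V"
    using hV unfolding hypergraph_def by blast+
  have fE: "finite E"
  proof (rule finite_subset)
    show "E \<subseteq> Pow V" using EV by blast
    show "finite (Pow V)" using fV by simp
  qed
  have AV: "?A \<subseteq> V" using PV SV by blast
  have fA: "finite ?A" using AV fV finite_subset by blast
  have fS: "finite S" using SV fV finite_subset by blast
  have IE: "induced E ?A \<subseteq> E" unfolding induced_def by blast
  have fI: "finite (induced E ?A)" using IE fE finite_subset by blast
  have h1: "uniform_hg r ?A (induced E ?A)"
    unfolding uniform_hg_def hypergraph_def
  proof (intro conjI ballI)
    show "finite ?A" using fA .
    fix e assume e: "e \<in> induced E ?A"
    then have "e \<in> E" "e \<subseteq> ?A" unfolding induced_def by auto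
    then show "e \<noteq> {}" "e \<subseteq> ?A" "card e = r" using hV un unfolding hypergraph_def by auto
  qed
  have h2: "kappa_bar ?A (induced E ?A) \<le> int k"
  proof -
    obtain V' E' where a1: "V' \<subseteq> ?A" and a2: "E' \<subseteq> induced E ?A" and a3: "hypergraph V' E'"
      and eq: "kappa V' E' = kappa_bar ?A (induced E ?A)"
      using kbar_ex[OF fA fI] by blast
    have "V' \<subseteq> V" using a1 AV by (rule subset_trans)
    moreover have "E' \<subseteq> E" using a2 IE by (rule subset_trans)
    ultimately have "kappa V' E' \<le> kappa_bar V E"
      using kbar_ge[OF fV fE _ _ a3] by blast
    then show ?thesis using eq kb by simp
  qed
  have h3: "\<forall>e. e \<subseteq> ?A \<and> card e = r \<and> e \<notin> induced E ?A \<longrightarrow>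
              kappa_bar ?A (insert e (induced E ?A)) \<ge> int k + 1"
  proof (intro allI impI)
    fix e assume a: "e \<subseteq> ?A \<and> card e = r \<and> e \<notin> induced E ?A"
    then have eA: "e \<subseteq> ?A" and ce: "card e = r" and eE: "e \<notin> E"
      unfolding induced_def by auto
    have big: "kappa_bar V (insert e E) \<ge> int k + 1" using mx eA AV ce eE by blast
    have fiE: "finite (insert e E)" using fE by simp
    obtain V' F' where V'V: "V' \<subseteq> V" and F'E: "F' \<subseteq> insert e E" and hF: "hypergraph V' F'"
      and kF: "kappa V' F' = kappa_bar V (insert e E)"
      using kbar_ex[OF fV fiE] by blast
    have kF1: "kappa V' F' \<ge> int k + 1" using kF big by simp
    have fV': "finite V'" using hF unfolding hypergraph_def by blast
    have F'V': "\<And>f. f \<in> F' \<Longrightarrow> f \<subseteq> V'" using hF unfolding hypergraph_def by blast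
    have "\<not> F' \<subseteq> E"
    proof
      assume "F' \<subseteq> E"
      then have "kappa V' F' \<le> kappa_bar V E" using kbar_ge[OF fV fE V'V _ hF] by blast
      then show False using kb kF1 by simp
    qed
    then have eF: "e \<in> F'" using F'E by blast
    then have eV': "e \<subseteq> V'" using F'V' by blast
    have V'A: "V' \<subseteq> ?A"
    proof (rule ccontr)
      assume "\<not> V' \<subseteq> ?A"
      then obtain q where q: "q \<in> V'" "q \<notin> ?A" by blast
      have "e \<inter> P \<noteq> {}"
      proof
        assume "e \<inter> P = {}"
        then have "e \<subseteq> S" using eA by blast
        then have "card e \<le> card S" using fS card_mono by blast
        then show False using cS kr ce by simp
      qed
      then obtain p where p: "p \<in> e" "p \<in> P" by blast
      define X where "X = V' \<inter> S"
      have pW: "p \<in> V' - X" using p eV' PV unfolding X_def by blast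
      have qW: "q \<in> V' - X" using q unfolding X_def by blast
      have "vertex_cut V' F' X"
        unfolding vertex_cut_def
      proof
        show "X \<subseteq> V'" unfolding X_def by blast
        show "\<not> connected_hg (V' - X) (induced F' (V' - X))"
        proof
          assume c: "connected_hg (V' - X) (induced F' (V' - X))"
          have "reachable (V' - X) (induced F' (V' - X)) p q"
            using c pW qW unfolding connected_hg_def by blast
          then obtain vs es where pa: "is_path (V' - X) (induced F' (V' - X)) vs es"
            and hv: "hd vs = p" and lv: "last vs = q"
            unfolding reachable_def by blast
          have cl: "\<forall>g\<in>induced F' (V' - X). g \<inter> P \<noteq> {} \<longrightarrow> g \<subseteq> P"
          proof (intro ballI impI)
            fix g assume g: "g \<in> induced F' (V' - X)" and gP: "g \<inter> P \<noteq> {}"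
            then have gF: "g \<in> F'" and gX: "g \<subseteq> V' - X" unfolding induced_def by auto
            have gVS: "g \<subseteq> V - S"
            proof
              fix z assume "z \<in> g"
              then have "z \<in> V'" "z \<notin> X" using gX by auto
              then show "z \<in> V - S" using V'V unfolding X_def by auto
            qed
            show "g \<subseteq> P"
            proof (cases "g = e")
              case True
              then show ?thesis using eA gVS by blast
            next
              case False
              then have "g \<in> E" using gF F'E by blast
              then show ?thesis using clo gVS gP by blast
            qed
          qed
          have "vs \<noteq> []" using pa unfolding is_path_def by blast
          then have "q \<in> set vs" using lv last_in_set by metis
          moreover have "set vs \<subseteq> P" using path_stays[OF pa cl] hv p by simp
          ultimately show False using q by blast
        qed
      qed
      then have "kappa V' F' \<le> int (card X)" using kappa_le_cut[OF fV'] by blast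
      moreover have "card X \<le> card S" using fS card_mono unfolding X_def by (metis inf_le2)
      ultimately show False using cS kF1 by simp
    qed
    have "F' \<subseteq> insert e (induced E ?A)"
    proof
      fix f assume f: "f \<in> F'"
      then have "f \<subseteq> ?A" using F'V' V'A by blast
      then show "f \<in> insert e (induced E ?A)" using f F'E unfolding induced_def by blast
    qed
    then have "kappa V' F' \<le> kappa_bar ?A (insert e (induced E ?A))"
      using kbar_ge[OF fA _ V'A _ hF] fI by simp
    then show "kappa_bar ?A (insert e (induced E ?A)) \<ge> int k + 1" using kF1 by simp
  qed
  show ?thesis unfolding vertex_k_maximal_def using h1 h2 h3 by blast
qed

theorem mainTheorem8:
  fixes n k r :: nat and V :: "'a set" and E :: "'a set set" and S C1 :: "'a set"
  assumes "k \<ge> 2" and "r \<ge> 2" and "k < r" and "n \<ge> k + r"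
    and "card V = n"
    and "vertex_k_maximal k r V E"
    and "vertex_cut V E S"
    and "\<forall>X. vertex_cut V E X \<longrightarrow> card S \<le> card X"
    and "component_hg (V - S) (induced E (V - S)) C1"
  shows "vertex_k_maximal k r (C1 \<union> S) (induced E (C1 \<union> S)) \<and>
         vertex_k_maximal k r ((V - (C1 \<union> S)) \<union> S) (induced E ((V - (C1 \<union> S)) \<union> S))"
proof -
  have VM: "vertex_k_maximal k r V E" using assms(6) .
  have hV: "hypergraph V E" and kb: "kappa_bar V E \<le> int k"
    using VM unfolding vertex_k_maximal_def uniform_hg_def by blast+
  have fV: "finite V" and EV: "\<And>f. f \<in> E \<Longrightarrow> f \<subseteq> V"
    using hV unfolding hypergraph_def by blast+
  have fE: "finite E"
  proof (rule finite_subset)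
    show "E \<subseteq> Pow V" using EV by blast
    show "finite (Pow V)" using fV by simp
  qed
  have SV: "S \<subseteq> V" using assms(7) unfolding vertex_cut_def by blast
  have "kappa V E = int (card S)" using kappa_min_cut[OF fV assms(7) assms(8)] .
  moreover have "kappa V E \<le> kappa_bar V E" using kbar_ge[OF fV fE _ _ hV] by blast
  ultimately have cS: "card S \<le> k" using kb by simp
  have C1V: "C1 \<subseteq> V - S" using assms(9) unfolding component_hg_def by blast
  have clo1: "\<And>f. f \<in> E \<Longrightarrow> f \<subseteq> V - S \<Longrightarrow> f \<inter> C1 \<noteq> {} \<Longrightarrow> f \<subseteq> C1"
  proof -
    fix f assume "f \<in> E" "f \<subseteq> V - S" "f \<inter> C1 \<noteq> {}"
    moreover have "f \<in> induced E (V - S)" using calculation unfolding induced_def by blast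
    ultimately show "f \<subseteq> C1" using comp_closed[OF assms(9)] by blast
  qed
  have clo2: "\<And>f. f \<in> E \<Longrightarrow> f \<subseteq> V - S \<Longrightarrow> f \<inter> (V - S - C1) \<noteq> {} \<Longrightarrow> f \<subseteq> V - S - C1"
  proof -
    fix f assume a: "f \<in> E" "f \<subseteq> V - S" "f \<inter> (V - S - C1) \<noteq> {}"
    show "f \<subseteq> V - S - C1"
    proof (cases "f \<inter> C1 = {}")
      case True then show ?thesis using a by blast
    next
      case False
      then have "f \<subseteq> C1" using clo1 a by blast
      then show ?thesis using a by blast
    qed
  qed
  have r1: "vertex_k_maximal k r (C1 \<union> S) (induced E (C1 \<union> S))"
    using side_max[OF VM SV cS assms(3) C1V clo1] .
  have r2: "vertex_k_maximal k r ((V - S - C1) \<union> S) (induced E ((V - S - C1) \<union> S))"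
    using side_max[OF VM SV cS assms(3) _ clo2] by blast
  have eq: "(V - (C1 \<union> S)) \<union> S = (V - S - C1) \<union> S" by blast
  show ?thesis using r1 r2 unfolding eq by blast
qed

end
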